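(* Let $r\ge 2$ be an integer and let $G$ be a connected $r$-regular graph of order $n$. (i) If $G$ is not a Moore graph of degree $r$ and diameter $2$, then $$\gamma_{\times r}(G)\le \frac{r^2-1}{r^2}\,n .$$ (ii) If $G$ is a Moore graph of degree $r$ and diameter $2$ (so $n=r^2+1$), then $$\gamma_{\times r}(G)=\frac{r^2}{r^2+1}\,n=r^2 .$$
   Context: All graphs are finite and simple. For a vertex $v$, $N[v]=\{v\}\cup\{u\in V(G): uv\in E(G)\}$ is its closed neighborhood. For a positive integer $k$, a $k$-tuple dominating set of $G$ is a set $S\subseteq V(G)$ with $|N[v]\cap S|\ge k$ for every $v\in V(G)$; $\gamma_{\times k}(G)$ denotes the minimum cardinality of such a set. A Moore graph of degree $r$ and diameter $2$ is an $r$-regular graph of diameter $2$ with exactly $1+r+r(r-1)=r^2+1$ vertices. *)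

theory Defs
  imports Complex_Main
begin

definition simple_graph :: "'a set \<Rightarrow> ('a \<Rightarrow> 'a \<Rightarrow> bool) \<Rightarrow> bool" where
  "simple_graph V E \<longleftrightarrow> finite V \<and> (\<forall>u v. E u v \<longrightarrow> u \<in> V \<and> v \<in> V)
     \<and> (\<forall>u v. E u v \<longrightarrow> E v u) \<and> (\<forall>v. \<not> E v v)"

definition closed_nbhd :: "'a set \<Rightarrow> ('a \<Rightarrow> 'a \<Rightarrow> bool) \<Rightarrow> 'a \<Rightarrow> 'a set" where
  "closed_nbhd V E v = {v} \<union> {u \<in> V. E u v}"

definition degree :: "'a set \<Rightarrow> ('a \<Rightarrow> 'a \<Rightarrow> bool) \<Rightarrow> 'a \<Rightarrow> nat" where
  "degree V E v = card {u \<in> V. E u v}"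

definition regular :: "'a set \<Rightarrow> ('a \<Rightarrow> 'a \<Rightarrow> bool) \<Rightarrow> nat \<Rightarrow> bool" where
  "regular V E r \<longleftrightarrow> (\<forall>v\<in>V. degree V E v = r)"

definition connected :: "'a set \<Rightarrow> ('a \<Rightarrow> 'a \<Rightarrow> bool) \<Rightarrow> bool" where
  "connected V E \<longleftrightarrow> V \<noteq> {} \<and> (\<forall>u\<in>V. \<forall>v\<in>V. E\<^sup>*\<^sup>* u v)"

fun dist_le :: "('a \<Rightarrow> 'a \<Rightarrow> bool) \<Rightarrow> nat \<Rightarrow> 'a \<Rightarrow> 'a \<Rightarrow> bool" where
  "dist_le E 0 u v \<longleftrightarrow> u = v"
| "dist_le E (Suc d) u v \<longleftrightarrow> dist_le E d u v \<or> (\<exists>w. dist_le E d u w \<and> E w v)"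

definition has_diameter :: "'a set \<Rightarrow> ('a \<Rightarrow> 'a \<Rightarrow> bool) \<Rightarrow> nat \<Rightarrow> bool" where
  "has_diameter V E d \<longleftrightarrow> (\<forall>u\<in>V. \<forall>v\<in>V. dist_le E d u v)
     \<and> (d > 0 \<longrightarrow> (\<exists>u\<in>V. \<exists>v\<in>V. \<not> dist_le E (d - 1) u v))"

definition moore_graph_deg_diam2 :: "'a set \<Rightarrow> ('a \<Rightarrow> 'a \<Rightarrow> bool) \<Rightarrow> nat \<Rightarrow> bool" where
  "moore_graph_deg_diam2 V E r \<longleftrightarrow> regular V E r \<and> has_diameter V E 2 \<and> card V = r^2 + 1"

definition k_tuple_dominating :: "'a set \<Rightarrow> ('a \<Rightarrow> 'a \<Rightarrow> bool) \<Rightarrow> nat \<Rightarrow> 'a set \<Rightarrow> bool" where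
  "k_tuple_dominating V E k S \<longleftrightarrow> S \<subseteq> V \<and> (\<forall>v\<in>V. card (closed_nbhd V E v \<inter> S) \<ge> k)"

definition k_tuple_domination_number :: "'a set \<Rightarrow> ('a \<Rightarrow> 'a \<Rightarrow> bool) \<Rightarrow> nat \<Rightarrow> nat" where
  "k_tuple_domination_number V E k = Min {card S | S. k_tuple_dominating V E k S}"

end

theory Submission
  imports Defs
begin

definition B2 :: "'a set \<Rightarrow> ('a \<Rightarrow> 'a \<Rightarrow> bool) \<Rightarrow> 'a \<Rightarrow> 'a set" where
  "B2 V E x = (\<Union>w\<in>closed_nbhd V E x. closed_nbhd V E w)"

definition packing :: "'a set \<Rightarrow> ('a \<Rightarrow> 'a \<Rightarrow> bool) \<Rightarrow> 'a set \<Rightarrow> bool" where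
  "packing V E T \<longleftrightarrow> (\<forall>t1\<in>T. \<forall>t2\<in>T. t1 \<noteq> t2 \<longrightarrow> closed_nbhd V E t1 \<inter> closed_nbhd V E t2 = {})"

definition RR :: "'a set \<Rightarrow> ('a \<Rightarrow> 'a \<Rightarrow> bool) \<Rightarrow> 'a set \<Rightarrow> 'a set" where
  "RR V E T = (\<Union>t\<in>T. B2 V E t)"

lemma sg_fin: "simple_graph V E \<Longrightarrow> finite V"
  unfolding simple_graph_def by (elim conjE)

lemma sg_sym: assumes "simple_graph V E" "E a b" shows "E b a"
proof -
  have "\<forall>u v. E u v \<longrightarrow> E v u" using assms(1) unfolding simple_graph_def by (elim conjE)
  thus ?thesis using assms(2) by blast
qed

lemma sg_inV: assumes "simple_graph V E" "E a b" shows "a \<in> V" "b \<in> V"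
proof -
  have "\<forall>u v. E u v \<longrightarrow> u \<in> V \<and> v \<in> V" using assms(1) unfolding simple_graph_def by (elim conjE)
  thus "a \<in> V" "b \<in> V" using assms(2) by blast+
qed

lemma sg_irr: assumes "simple_graph V E" shows "\<not> E a a"
proof -
  have "\<forall>v. \<not> E v v" using assms(1) unfolding simple_graph_def by (elim conjE)
  thus ?thesis by blast
qed

lemma N_sub: "v \<in> V \<Longrightarrow> closed_nbhd V E v \<subseteq> V"
  by (auto simp: closed_nbhd_def)

lemma N_sym: "simple_graph V E \<Longrightarrow> u \<in> V \<Longrightarrow> v \<in> V \<Longrightarrow> u \<in> closed_nbhd V E v \<longleftrightarrow> v \<in> closed_nbhd V E u"
proof -
  assume G: "simple_graph V E" and u: "u \<in> V" and v: "v \<in> V"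
  have "E u v \<longleftrightarrow> E v u" using sg_sym[OF G, of u v] sg_sym[OF G, of v u] by blast
  thus ?thesis using u v by (auto simp: closed_nbhd_def)
qed

lemma N_self: "v \<in> closed_nbhd V E v"
  by (auto simp: closed_nbhd_def)

lemma N_card: assumes "simple_graph V E" "regular V E r" "v \<in> V"
  shows "card (closed_nbhd V E v) = r + 1"
proof -
  have "closed_nbhd V E v = insert v {u\<in>V. E u v}" by (auto simp: closed_nbhd_def)
  moreover have "v \<notin> {u\<in>V. E u v}" using sg_irr[OF assms(1)] by blast
  moreover have "finite {u\<in>V. E u v}" using sg_fin[OF assms(1)] by simp
  moreover have "card {u\<in>V. E u v} = r" using assms(2,3) by (auto simp: regular_def degree_def)
  ultimately show ?thesis by simp
qed

lemma B2_sub: "v \<in> V \<Longrightarrow> B2 V E v \<subseteq> V"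
  by (auto simp: B2_def closed_nbhd_def)

lemma B2_card: assumes "simple_graph V E" "regular V E r" "x \<in> V"
  shows "card (B2 V E x) \<le> r^2 + 1"
proof -
  define A where "A w = {u\<in>V. E u w}" for w
  have fin: "finite V" using sg_fin[OF assms(1)] .
  have cA: "w \<in> V \<Longrightarrow> card (A w) = r" for w using assms(2) by (auto simp: regular_def degree_def A_def)
  have sub: "B2 V E x \<subseteq> closed_nbhd V E x \<union> (\<Union>w\<in>A x. A w - {x})"
    by (auto simp: B2_def closed_nbhd_def A_def)
  have "card (B2 V E x) \<le> card (closed_nbhd V E x \<union> (\<Union>w\<in>A x. A w - {x}))"
  proof (rule card_mono[OF _ sub])
    show "finite (closed_nbhd V E x \<union> (\<Union>w\<in>A x. A w - {x}))"
      by (rule finite_subset[OF _ fin]) (use assms(3) in \<open>auto simp: closed_nbhd_def A_def\<close>)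
  qed
  also have "\<dots> \<le> card (closed_nbhd V E x) + card (\<Union>w\<in>A x. A w - {x})" by (rule card_Un_le)
  also have "card (\<Union>w\<in>A x. A w - {x}) \<le> (\<Sum>w\<in>A x. card (A w - {x}))" by (rule card_UN_le) (use fin in \<open>auto simp: A_def\<close>)
  also have "(\<Sum>w\<in>A x. card (A w - {x})) = (\<Sum>w\<in>A x. r - 1)"
  proof (rule sum.cong)
    fix w assume "w \<in> A x"
    hence "w \<in> V" "x \<in> A w" using assms(3) sg_sym[OF assms(1), of w x] by (auto simp: A_def)
    thus "card (A w - {x}) = r - 1" using cA[of w] by (simp add: card_Diff_singleton)
  qed simp
  also have "\<dots> = r * (r - 1)" using cA[OF assms(3)] by simp
  finally have "card (B2 V E x) \<le> r + 1 + r * (r - 1)" using N_card[OF assms] by simp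
  also have "\<dots> = r^2 + 1" by (cases r) (auto simp: power2_eq_square)
  finally show ?thesis .
qed

lemma packing_dom: assumes "simple_graph V E" "regular V E r" "packing V E T" "T \<subseteq> V"
  shows "k_tuple_dominating V E r (V - T)"
  unfolding k_tuple_dominating_def
proof (intro conjI ballI)
  fix w assume w: "w \<in> V"
  have fin: "finite (closed_nbhd V E w)" using sg_fin[OF assms(1)] N_sub[OF w] by (auto intro: finite_subset)
  have le1: "card (closed_nbhd V E w \<inter> T) \<le> 1"
  proof -
    have "\<forall>a\<in>closed_nbhd V E w \<inter> T. \<forall>b\<in>closed_nbhd V E w \<inter> T. a = b"
    proof (intro ballI, rule ccontr)
      fix a b assume a: "a \<in> closed_nbhd V E w \<inter> T" and b: "b \<in> closed_nbhd V E w \<inter> T" and ne: "a \<noteq> b"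
      have "w \<in> closed_nbhd V E a" "w \<in> closed_nbhd V E b"
        using a b N_sym[OF assms(1) _ w] assms(4) by auto
      thus False using assms(3) a b ne by (auto simp: packing_def)
    qed
    moreover have "finite (closed_nbhd V E w \<inter> T)" using fin by simp
    ultimately show ?thesis using card_le_Suc0_iff_eq[of "closed_nbhd V E w \<inter> T"] by simp
  qed
  have "card (closed_nbhd V E w) = card (closed_nbhd V E w \<inter> (V - T)) + card (closed_nbhd V E w \<inter> T)"
  proof -
    have "closed_nbhd V E w = (closed_nbhd V E w \<inter> (V - T)) \<union> (closed_nbhd V E w \<inter> T)"
      using N_sub[OF w] by auto
    hence "card (closed_nbhd V E w) = card ((closed_nbhd V E w \<inter> (V - T)) \<union> (closed_nbhd V E w \<inter> T))" by simp
    also have "\<dots> = card (closed_nbhd V E w \<inter> (V - T)) + card (closed_nbhd V E w \<inter> T)"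
      by (rule card_Un_disjoint) (use fin in auto)
    finally show ?thesis .
  qed
  thus "r \<le> card (closed_nbhd V E w \<inter> (V - T))" using le1 N_card[OF assms(1,2) w] by simp
qed auto

lemma dom_set_fin: "simple_graph V E \<Longrightarrow> finite {card S |S. k_tuple_dominating V E k S}"
proof -
  assume "simple_graph V E"
  hence "finite (Pow V)" using sg_fin by blast
  moreover have "{card S |S. k_tuple_dominating V E k S} \<subseteq> card ` Pow V"
    by (auto simp: k_tuple_dominating_def)
  ultimately show ?thesis by (meson finite_surj)
qed

lemma gamma_le: "simple_graph V E \<Longrightarrow> k_tuple_dominating V E k S \<Longrightarrow> k_tuple_domination_number V E k \<le> card S"
  unfolding k_tuple_domination_number_def by (rule Min_le) (auto intro: dom_set_fin)


lemma cross: "E\<^sup>*\<^sup>* a b \<Longrightarrow> a \<in> R \<Longrightarrow> b \<notin> R \<Longrightarrow> \<exists>y z. y \<in> R \<and> z \<notin> R \<and> E y z"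
  by (induction rule: rtranclp_induct) blast+

lemma greedy_step:
  assumes G: "simple_graph V E" and reg: "regular V E r" and con: "connected V E"
    and P: "packing V E T" and TV: "T \<subseteq> V" and vT: "v \<in> T"
    and C: "card (RR V E T) \<le> (r^2 - 1) * card T + 2" and ne: "RR V E T \<noteq> V"
  shows "\<exists>x\<in>V - T. packing V E (insert x T) \<and> card (RR V E (insert x T)) \<le> (r^2 - 1) * card (insert x T) + 2"
proof -
  have fin: "finite V" using sg_fin[OF G] .
  have sym: "E a b \<Longrightarrow> E b a" for a b using sg_sym[OF G] .
  have inV: "E a b \<Longrightarrow> a \<in> V \<and> b \<in> V" for a b using sg_inV[OF G] by blast
  have RRV: "RR V E T \<subseteq> V" unfolding RR_def
  proof (rule UN_least)
    fix t assume "t \<in> T"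
    hence "t \<in> V" using TV by blast
    thus "B2 V E t \<subseteq> V" by (rule B2_sub)
  qed
  have vR: "v \<in> RR V E T" unfolding RR_def B2_def using vT N_self[of v V E] by blast
  obtain x0 where x0: "x0 \<in> V" "x0 \<notin> RR V E T" using RRV ne by auto
  have path: "E\<^sup>*\<^sup>* v x0" using con x0(1) TV vT unfolding connected_def by blast
  obtain y x where yx: "y \<in> RR V E T" "x \<notin> RR V E T" "E y x"
    using cross[OF path vR x0(2)] by blast
  have xV: "x \<in> V" and yV: "y \<in> V" using inV[OF yx(3)] by auto
  from yx(1) obtain t b where t: "t \<in> T" "b \<in> closed_nbhd V E t" "y \<in> closed_nbhd V E b"
    unfolding RR_def B2_def by blast
  have tV: "t \<in> V" using TV t(1) by blast
  have bV: "b \<in> V" using N_sub[OF tV] t(2) by blast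
  have xNy: "x \<in> closed_nbhd V E y" using sym[OF yx(3)] xV by (auto simp: closed_nbhd_def)
  have ynt: "y \<notin> closed_nbhd V E t"
  proof
    assume "y \<in> closed_nbhd V E t"
    hence "x \<in> B2 V E t" using xNy by (auto simp: B2_def)
    thus False using yx(2) t(1) by (auto simp: RR_def)
  qed
  hence yb: "y \<noteq> b" using t(2) by auto
  have bR: "b \<in> RR V E T" unfolding RR_def B2_def using t(1,2) N_self[of b V E] by blast
  have yNx: "y \<in> closed_nbhd V E x" using yx(3) yV by (auto simp: closed_nbhd_def)
  have yB: "y \<in> B2 V E x" unfolding B2_def using yNx N_self[of y V E] by blast
  have bNy: "b \<in> closed_nbhd V E y" using N_sym[OF G yV bV] t(3) by simp
  have bB: "b \<in> B2 V E x" using yNx bNy by (auto simp: B2_def)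
  have xT: "x \<notin> T" using yx(2) N_self[of x V E] unfolding RR_def B2_def by blast
  have P': "packing V E (insert x T)"
    unfolding packing_def
  proof (intro ballI impI)
    have disj: "closed_nbhd V E x \<inter> closed_nbhd V E t' = {}" if "t' \<in> T" for t'
    proof (rule ccontr)
      assume "closed_nbhd V E x \<inter> closed_nbhd V E t' \<noteq> {}"
      then obtain z where z: "z \<in> closed_nbhd V E x" "z \<in> closed_nbhd V E t'" by auto
      have zV: "z \<in> V" using z(1) N_sub[OF xV] by auto
      have "x \<in> closed_nbhd V E z" using N_sym[OF G xV zV] z(1) by simp
      hence "x \<in> B2 V E t'" using z(2) by (auto simp: B2_def)
      thus False using yx(2) that by (auto simp: RR_def)
    qed
    fix t1 t2 assume t12: "t1 \<in> insert x T" "t2 \<in> insert x T" "t1 \<noteq> t2"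
    show "closed_nbhd V E t1 \<inter> closed_nbhd V E t2 = {}"
    proof (cases "t1 = x")
      case True
      hence "t2 \<in> T" using t12 by blast
      thus ?thesis using disj True by blast
    next
      case f1: False
      hence t1T: "t1 \<in> T" using t12 by blast
      show ?thesis
      proof (cases "t2 = x")
        case True
        thus ?thesis using disj[OF t1T] by blast
      next
        case False
        hence "t2 \<in> T" using t12 by blast
        thus ?thesis using P t1T t12(3) unfolding packing_def by blast
      qed
    qed
  qed
  have finT: "finite T" using finite_subset[OF TV fin] .
  have finB: "finite (B2 V E x)" using finite_subset[OF B2_sub[OF xV] fin] .
  have eq: "RR V E (insert x T) = (B2 V E x - RR V E T) \<union> RR V E T" by (auto simp: RR_def)
  have sub1: "B2 V E x - RR V E T \<subseteq> B2 V E x - {y, b}" using bR yx(1) by blast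
  have "card (B2 V E x - RR V E T) \<le> card (B2 V E x - {y, b})"
    by (rule card_mono[OF _ sub1]) (use finB in simp)
  also have "card (B2 V E x - {y, b}) = card (B2 V E x) - card {y, b}"
    by (rule card_Diff_subset) (use yB bB in auto)
  also have "card {y, b} = 2" using yb by simp
  finally have c1: "card (B2 V E x - RR V E T) \<le> card (B2 V E x) - 2" .
  have c2: "card (B2 V E x) \<le> r^2 + 1" using B2_card[OF G reg xV] .
  have c4: "card (B2 V E x - RR V E T) \<le> r^2 - 1" using c1 c2 by linarith
  have "card (RR V E (insert x T)) \<le> card (B2 V E x - RR V E T) + card (RR V E T)"
    unfolding eq by (rule card_Un_le)
  also have "\<dots> \<le> (r^2 - 1) + ((r^2 - 1) * card T + 2)" by (rule add_mono[OF c4 C])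
  also have "\<dots> = (r^2 - 1) * card (insert x T) + 2"
  proof -
    have cI: "card (insert x T) = card T + 1" using finT xT by simp
    have h: "\<And>q c::nat. q + (q * c + 2) = q * (c + 1) + 2" by (simp add: algebra_simps)
    show ?thesis unfolding cI by (rule h)
  qed
  finally show ?thesis using P' xV xT by blast
qed

lemma greedy:
  assumes G: "simple_graph V E" and reg: "regular V E r" and con: "connected V E"
    and vV: "v \<in> V" and r: "r \<ge> 1"
  shows "\<exists>T. packing V E T \<and> T \<subseteq> V \<and> v \<in> T \<and> card (RR V E T) \<le> (r^2 - 1) * card T + 2
           \<and> (RR V E T = V \<or> m \<le> card T)"
proof (induction m)
  case 0
  have e1: "RR V E {v} = B2 V E v" by (simp add: RR_def)
  have r1: "1 \<le> r^2" using r by (metis one_le_power)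
  have e2: "(r^2 - 1) * card {v} + 2 = r^2 + 1" using r1 by simp
  have "card (RR V E {v}) \<le> (r^2 - 1) * card {v} + 2"
    unfolding e1 e2 using B2_card[OF G reg vV] .
  moreover have "packing V E {v}" by (simp add: packing_def)
  ultimately show ?case using vV by blast
next
  case (Suc m)
  then obtain T where T: "packing V E T" "T \<subseteq> V" "v \<in> T" "card (RR V E T) \<le> (r^2 - 1) * card T + 2"
    "RR V E T = V \<or> m \<le> card T" by blast
  show ?case
  proof (cases "RR V E T = V")
    case True thus ?thesis using T by blast
  next
    case False
    then obtain x where x: "x \<in> V - T" "packing V E (insert x T)"
      "card (RR V E (insert x T)) \<le> (r^2 - 1) * card (insert x T) + 2"
      using greedy_step[OF G reg con T(1-4)] by blast
    have "finite T" using finite_subset[OF T(2) sg_fin[OF G]] .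
    hence "card (insert x T) = Suc (card T)" using x(1) by simp
    hence "Suc m \<le> card (insert x T)" using T(5) False by simp
    moreover have "insert x T \<subseteq> V" "v \<in> insert x T" using x(1) T(2,3) by auto
    ultimately show ?thesis using x(2,3) by blast
  qed
qed

lemma dist2_iff: "dist_le E 2 a b \<longleftrightarrow> a = b \<or> E a b \<or> (\<exists>w. E a w \<and> E w b)"
  by (auto simp: numeral_2_eq_2)

lemma B2_dist: assumes "simple_graph V E" "u \<in> B2 V E w" shows "dist_le E 2 u w"
proof -
  obtain z where z: "z \<in> closed_nbhd V E w" "u \<in> closed_nbhd V E z" using assms(2) by (auto simp: B2_def)
  have "z = w \<or> E z w" "u = z \<or> E u z" using z by (auto simp: closed_nbhd_def)
  thus ?thesis unfolding dist2_iff by blast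
qed

lemma dist_common: assumes G: "simple_graph V E" and ab: "a \<in> V" "b \<in> V" and d: "dist_le E 2 a b"
  shows "\<exists>z\<in>V. a \<in> closed_nbhd V E z \<and> b \<in> closed_nbhd V E z"
proof -
  have sym: "E x y \<Longrightarrow> E y x" for x y using sg_sym[OF G] .
  have inV: "E x y \<Longrightarrow> x \<in> V \<and> y \<in> V" for x y using sg_inV[OF G] by blast
  consider "a = b" | "E a b" | w where "E a w" "E w b" using d unfolding dist2_iff by blast
  thus ?thesis
  proof cases
    case 1 thus ?thesis using ab by (auto simp: closed_nbhd_def)
  next
    case 2 thus ?thesis using ab by (auto simp: closed_nbhd_def)
  next
    case 3 thus ?thesis using inV[OF 3(1)] sym[OF 3(2)] ab by (auto simp: closed_nbhd_def)
  qed
qed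


lemma r_lt_sq: "(r::nat) \<ge> 2 \<Longrightarrow> r + 1 < r^2 + 1"
proof -
  assume "r \<ge> 2"
  hence a: "r * 2 \<le> r * r" by (intro mult_le_mono2)
  have b: "r < r * 2" using \<open>r \<ge> 2\<close> by simp
  show ?thesis unfolding power2_eq_square using a b by linarith
qed

lemma nat_arith1: "(2::nat) \<le> c \<Longrightarrow> (q - 1) * c + 2 \<le> q * c \<or> q = 0"
proof (cases q)
  case (Suc p)
  assume "2 \<le> c"
  thus ?thesis using Suc by simp
qed simp

theorem theorem5:
  fixes V :: "'a set" and E :: "'a \<Rightarrow> 'a \<Rightarrow> bool" and r :: nat
  assumes "simple_graph V E" and "connected V E" and "regular V E r" and "r \<ge> 2"
  shows "(\<not> moore_graph_deg_diam2 V E r \<longrightarrow>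
            real (k_tuple_domination_number V E r) \<le> (real r ^ 2 - 1) / real r ^ 2 * real (card V))
       \<and> (moore_graph_deg_diam2 V E r \<longrightarrow>
            real (k_tuple_domination_number V E r) = real r ^ 2 / (real r ^ 2 + 1) * real (card V)
          \<and> k_tuple_domination_number V E r = r ^ 2)"
proof -
  note G = assms(1) and con = assms(2) and reg = assms(3) and r2 = assms(4)
  have fin: "finite V" using G unfolding simple_graph_def by (rule conjunct1)
  have Vne: "V \<noteq> {}" using con unfolding connected_def by (rule conjunct1)
  have r1: "r \<ge> 1" using r2 by linarith
  have rsq: "1 \<le> r^2" using one_le_power[OF r1, of 2] by blast
  have key: "\<exists>T. packing V E T \<and> T \<subseteq> V \<and> card V \<le> r^2 * card T"
    if nm: "\<not> moore_graph_deg_diam2 V E r"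
  proof (cases "\<exists>v\<in>V. B2 V E v \<noteq> V")
    case True
    then obtain v where v: "v \<in> V" "B2 V E v \<noteq> V" by blast
    obtain T where T: "packing V E T" "T \<subseteq> V" "v \<in> T" "card (RR V E T) \<le> (r^2 - 1) * card T + 2"
      "RR V E T = V \<or> Suc (card V) \<le> card T"
      using greedy[OF G reg con v(1) r1, of "Suc (card V)"] by blast
    have finT: "finite T" using finite_subset[OF T(2) fin] .
    have "card T \<le> card V" using card_mono[OF fin T(2)] .
    hence RV: "RR V E T = V" using T(5) by linarith
    have "T \<noteq> {v}" using RV v(2) by (auto simp: RR_def)
    then obtain u where u: "u \<in> T" "u \<noteq> v" using T(3) by blast
    have "{u, v} \<subseteq> T" using u T(3) by blast
    hence "card {u, v} \<le> card T" using card_mono[OF finT] by blast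
    moreover have "card {u, v} = 2" using u(2) by simp
    ultimately have c2: "2 \<le> card T" by linarith
    have "card V \<le> (r^2 - 1) * card T + 2" using T(4) unfolding RV .
    also have "\<dots> \<le> r^2 * card T" using nat_arith1[OF c2, of "r^2"] rsq by linarith
    finally show ?thesis using T(1,2) by blast
  next
    case False
    hence all: "\<forall>v\<in>V. B2 V E v = V" by blast
    obtain v where v: "v \<in> V" using Vne by blast
    have le: "card V \<le> r^2 + 1" using B2_card[OF G reg v] all v by simp
    have ne: "card V \<noteq> r^2 + 1"
    proof
      assume c: "card V = r^2 + 1"
      have d1: "\<forall>u\<in>V. \<forall>w\<in>V. dist_le E 2 u w" using all B2_dist[OF G] by blast
      have "card (closed_nbhd V E v) < card V" using N_card[OF G reg v] c r_lt_sq[OF r2] by simp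
      hence "\<not> V \<subseteq> closed_nbhd V E v"
      proof -
        assume lt: "card (closed_nbhd V E v) < card V"
        show ?thesis
        proof
          assume "V \<subseteq> closed_nbhd V E v"
          hence "card V \<le> card (closed_nbhd V E v)" by (rule card_mono[OF finite_subset[OF N_sub[OF v] fin]])
          thus False using lt by linarith
        qed
      qed
      then obtain u where u: "u \<in> V" "u \<notin> closed_nbhd V E v" by blast
      have "\<not> dist_le E (2 - 1) u v" using u by (auto simp: numeral_2_eq_2 closed_nbhd_def)
      hence "has_diameter V E 2" using d1 u(1) v unfolding has_diameter_def by blast
      hence "moore_graph_deg_diam2 V E r" using reg c by (simp add: moore_graph_deg_diam2_def)
      thus False using nm by simp
    qed
    have "card {v} = 1" by simp
    have "card V \<le> r^2" using le ne by linarith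
    hence "card V \<le> r^2 * card {v}" by simp
    moreover have "packing V E {v}" by (simp add: packing_def)
    ultimately show ?thesis using v by blast
  qed
  have part1: "real (k_tuple_domination_number V E r) \<le> (real r ^ 2 - 1) / real r ^ 2 * real (card V)"
    if nm: "\<not> moore_graph_deg_diam2 V E r"
  proof -
    obtain T where T: "packing V E T" "T \<subseteq> V" "card V \<le> r^2 * card T" using key[OF nm] by blast
    have finT: "finite T" using finite_subset[OF T(2) fin] .
    have "k_tuple_domination_number V E r \<le> card (V - T)"
      by (rule gamma_le[OF G packing_dom[OF G reg T(1,2)]])
    also have "card (V - T) = card V - card T" using card_Diff_subset[OF finT T(2)] .
    finally have g: "real (k_tuple_domination_number V E r) \<le> real (card V) - real (card T)"
      using card_mono[OF fin T(2)] by linarith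
    have Rpos: "real r ^ 2 > 0" using r1 by simp
    have h: "real (card V) \<le> real r ^ 2 * real (card T)"
      using T(3) by (metis of_nat_le_iff of_nat_mult of_nat_power)
    have "real (card V) / real r ^ 2 \<le> real (card T)" using h Rpos by (simp add: divide_le_eq mult.commute)
    moreover have "(real r ^ 2 - 1) / real r ^ 2 * real (card V) = real (card V) - real (card V) / real r ^ 2"
      using Rpos by (simp add: field_simps)
    ultimately show ?thesis using g by linarith
  qed
  have part2: "real (k_tuple_domination_number V E r) = real r ^ 2 / (real r ^ 2 + 1) * real (card V)
          \<and> k_tuple_domination_number V E r = r ^ 2"
    if m: "moore_graph_deg_diam2 V E r"
  proof -
    have c: "card V = r^2 + 1" and diam: "has_diameter V E 2" using m by (auto simp: moore_graph_deg_diam2_def)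
    obtain v where v: "v \<in> V" using Vne by blast
    have dv: "k_tuple_dominating V E r (V - {v})"
      by (rule packing_dom[OF G reg]) (use v in \<open>auto simp: packing_def\<close>)
    have up: "k_tuple_domination_number V E r \<le> r^2"
      using gamma_le[OF G dv] card_Diff_singleton[OF v] c by linarith
    have "k_tuple_domination_number V E r \<in> {card S |S. k_tuple_dominating V E r S}"
      unfolding k_tuple_domination_number_def by (rule Min_in[OF dom_set_fin[OF G]]) (use dv in blast)
    then obtain S where S: "k_tuple_dominating V E r S" "k_tuple_domination_number V E r = card S" by blast
    have SV: "S \<subseteq> V" using S(1) by (simp add: k_tuple_dominating_def)
    have one: "\<forall>a\<in>V - S. \<forall>b\<in>V - S. a = b"
    proof (intro ballI, rule ccontr)
      fix a b assume a: "a \<in> V - S" and b: "b \<in> V - S" and ab: "a \<noteq> b"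
      have "dist_le E 2 a b" using diam a b unfolding has_diameter_def by blast
      then obtain z where z: "z \<in> V" "a \<in> closed_nbhd V E z" "b \<in> closed_nbhd V E z"
        using dist_common[OF G] a b by blast
      have finN: "finite (closed_nbhd V E z)" using finite_subset[OF N_sub[OF z(1)] fin] .
      have "closed_nbhd V E z \<inter> S \<subseteq> closed_nbhd V E z - {a, b}" using a b by blast
      hence "card (closed_nbhd V E z \<inter> S) \<le> card (closed_nbhd V E z - {a, b})"
        by (rule card_mono[rotated]) (use finN in simp)
      also have "\<dots> = card (closed_nbhd V E z) - card {a, b}"
        by (rule card_Diff_subset) (use z in auto)
      also have "\<dots> = r - 1"
      proof -
        have "card {a, b} = 2" using ab by simp
        thus ?thesis using N_card[OF G reg z(1)] by linarith
      qed
      finally have "card (closed_nbhd V E z \<inter> S) \<le> r - 1" .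
      moreover have "r \<le> card (closed_nbhd V E z \<inter> S)" using S(1) z(1) by (simp add: k_tuple_dominating_def)
      ultimately show False using r1 by linarith
    qed
    have fVS: "finite (V - S)" using fin by simp
    have "card (V - S) \<le> Suc 0" using card_le_Suc0_iff_eq[OF fVS] one by blast
    moreover have "card V = card S + card (V - S)"
      using card_Diff_subset[OF finite_subset[OF SV fin] SV] card_mono[OF fin SV] by linarith
    ultimately have "card S \<ge> r^2" using c by linarith
    hence eq: "k_tuple_domination_number V E r = r^2" using up S(2) by linarith
    have "real (card V) = real r ^ 2 + 1" using c by simp
    moreover have "real r ^ 2 + 1 \<noteq> 0"
    proof -
      have "0 \<le> real r ^ 2" by simp
      thus ?thesis by linarith
    qed
    ultimately have "real r ^ 2 / (real r ^ 2 + 1) * real (card V) = real r ^ 2" by simp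
    thus ?thesis using eq by simp
  qed
  show ?thesis by (rule conjI[OF impI[OF part1] impI[OF part2]])
qed

end
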